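(* Let $V_0=\mathbb{C}[x_1,x_2,\dots]$ with each $x_i$ primitive, let $A$ be a commutative $\mathbb{C}$-algebra, let $r$ be an $A$-valued bicharacter on $V_0$, and put $q_{mn}=r(x_m\otimes x_n)\in A$ for $m,n\ge1$. Then the map $\mathrm{EQ}_r\colon V_0\to V_0\otimes A$, $f\mapsto \sum r(f'\otimes f'')f'''$, is the exponential of the infinite order quadratic differential operator \[ Q_p=\sum_{m,n\ge1}q_{mn}\frac{\partial^2}{\partial x_m\partial x_n}, \] i.e. $\mathrm{EQ}_r(f)=e^{Q_p}(f)$ for all $f\in V_0$.
   Context: The Hopf structure on $V_0$: $\Delta(x_i)=x_i\otimes 1+1\otimes x_i$, $\eta(x_i)=0$, $S(x_i)=-x_i$. Sweedler notation: $\Delta(f)=\sum f'\otimes f''$, $\Delta^2(f)=\sum f'\otimes f''\otimes f'''$. An $A$-valued bicharacter on $V_0$ is a linear map $r:V_0\otimes V_0\to A$ with $r(1\otimes a)=\eta(a)=r(a\otimes 1)$, $r(ab\otimes c)=\sum r(a\otimes c')r(b\otimes c'')$, $r(a\otimes bc)=\sum r(a'\otimes b)r(a''\otimes c)$. The operator $e^{Q_p}=\sum_{k\ge0}Q_p^k/k!$ acts on polynomials (locally finitely, since $Q_p$ lowers degree by 2), $A$-linearly. *)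

theory Defs
  imports Complex_Main "HOL-Library.Poly_Mapping" "HOL-Library.Product_Plus"
begin

text \<open>Monomials in the variables x_i (i :: nat): exponent vectors.\<close>
type_synonym mon = "nat \<Rightarrow>\<^sub>0 nat"

text \<open>V_0 = C[x_1,x_2,...]; V_0 (x) V_0 and V_0 (x) V_0 (x) V_0 as the polynomial
  algebras on the product monomial bases (multiplication = convolution, i.e.
  the tensor product algebra structure).\<close>
type_synonym V0 = "mon \<Rightarrow>\<^sub>0 complex"
type_synonym V0V0 = "(mon \<times> mon) \<Rightarrow>\<^sub>0 complex"
type_synonym V0V0V0 = "(mon \<times> mon \<times> mon) \<Rightarrow>\<^sub>0 complex"
text \<open>V_0 (x) A = A[x_1,x_2,...].\<close>
type_synonym 'a V0A = "mon \<Rightarrow>\<^sub>0 'a"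

definition var :: "nat \<Rightarrow> V0" where
  "var i = Poly_Mapping.single (Poly_Mapping.single i 1) 1"

definition mono :: "mon \<Rightarrow> V0" where
  "mono \<alpha> = Poly_Mapping.single \<alpha> 1"

text \<open>Evaluation (substitution) of a polynomial in V_0: the unique algebra map
  sending scalars through h and x_i to s i.\<close>
definition peval :: "(complex \<Rightarrow> 'b::comm_semiring_1) \<Rightarrow> (nat \<Rightarrow> 'b) \<Rightarrow> V0 \<Rightarrow> 'b" where
  "peval h s f = (\<Sum>\<alpha>\<in>Poly_Mapping.keys f. h (Poly_Mapping.lookup f \<alpha>) * (\<Prod>i\<in>Poly_Mapping.keys \<alpha>. s i ^ Poly_Mapping.lookup (\<alpha>::mon) (i::nat)))"

definition Delta :: "V0 \<Rightarrow> V0V0" where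
  "Delta f = peval (\<lambda>c. Poly_Mapping.single 0 c)
     (\<lambda>i. Poly_Mapping.single (Poly_Mapping.single i 1, 0) 1
        + Poly_Mapping.single (0, Poly_Mapping.single i 1) 1) f"

text \<open>Iterated coproduct Delta^2 = (Delta (x) id) o Delta, the algebra map with
  x_i \<mapsto> x_i(x)1(x)1 + 1(x)x_i(x)1 + 1(x)1(x)x_i.\<close>
definition Delta2 :: "V0 \<Rightarrow> V0V0V0" where
  "Delta2 f = peval (\<lambda>c. Poly_Mapping.single 0 c)
     (\<lambda>i. Poly_Mapping.single (Poly_Mapping.single i 1, 0, 0) 1
        + Poly_Mapping.single (0, Poly_Mapping.single i 1, 0) 1
        + Poly_Mapping.single (0, 0, Poly_Mapping.single i 1) 1) f"

definition counit :: "V0 \<Rightarrow> complex" where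
  "counit f = peval (\<lambda>c. c) (\<lambda>_. 0) f"

definition tens :: "V0 \<Rightarrow> V0 \<Rightarrow> V0V0" where
  "tens a b = (\<Sum>\<alpha>\<in>Poly_Mapping.keys a. \<Sum>\<beta>\<in>Poly_Mapping.keys b.
      Poly_Mapping.single (\<alpha>, \<beta>) (Poly_Mapping.lookup a \<alpha> * Poly_Mapping.lookup b \<beta>))"

text \<open>Sweedler sum: for u = \<Sum> u' (x) u'' in V_0 (x) V_0 and a C-bilinear map
  Phi : V_0 \<times> V_0 \<rightarrow> A (A a C-algebra via emb), the value \<Sum> Phi(u',u'').\<close>
definition sweedler2 :: "(complex \<Rightarrow> 'a::comm_ring_1) \<Rightarrow> (V0 \<Rightarrow> V0 \<Rightarrow> 'a) \<Rightarrow> V0V0 \<Rightarrow> 'a" where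
  "sweedler2 emb \<Phi> u = (\<Sum>p\<in>Poly_Mapping.keys u. emb (Poly_Mapping.lookup u p) * \<Phi> (mono (fst p)) (mono (snd p)))"

text \<open>A commutative C-algebra A: a commutative ring with a unital ring homomorphism
  emb : C \<rightarrow> A (the structure map).\<close>
definition calg_hom :: "(complex \<Rightarrow> 'a::comm_ring_1) \<Rightarrow> bool" where
  "calg_hom emb \<longleftrightarrow> emb 1 = 1 \<and> (\<forall>x y. emb (x + y) = emb x + emb y) \<and>
     (\<forall>x y. emb (x * y) = emb x * emb y)"

definition clinear2 :: "(complex \<Rightarrow> 'a::comm_ring_1) \<Rightarrow> (V0V0 \<Rightarrow> 'a) \<Rightarrow> bool" where
  "clinear2 emb r \<longleftrightarrow> (\<forall>u v. r (u + v) = r u + r v) \<and>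
     (\<forall>c u. r (Poly_Mapping.single 0 c * u) = emb c * r u)"

definition bichar :: "(complex \<Rightarrow> 'a::comm_ring_1) \<Rightarrow> (V0V0 \<Rightarrow> 'a) \<Rightarrow> bool" where
  "bichar emb r \<longleftrightarrow> clinear2 emb r \<and>
     (\<forall>a. r (tens 1 a) = emb (counit a) \<and> r (tens a 1) = emb (counit a)) \<and>
     (\<forall>a b c. r (tens (a * b) c) = sweedler2 emb (\<lambda>c' c''. r (tens a c') * r (tens b c'')) (Delta c)) \<and>
     (\<forall>a b c. r (tens a (b * c)) = sweedler2 emb (\<lambda>a' a''. r (tens a' b) * r (tens a'' c)) (Delta a))"

text \<open>EQ_r(f) = \<Sum> r(f' (x) f'') f''' in V_0 (x) A = A[x].\<close>
definition EQ :: "(complex \<Rightarrow> 'a::comm_ring_1) \<Rightarrow> (V0V0 \<Rightarrow> 'a) \<Rightarrow> V0 \<Rightarrow> 'a V0A" where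
  "EQ emb r f = (let u = Delta2 f in
     (\<Sum>p\<in>Poly_Mapping.keys u. case p of (\<alpha>, \<beta>, \<gamma>) \<Rightarrow>
        Poly_Mapping.single \<gamma> (emb (Poly_Mapping.lookup u p) * r (tens (mono \<alpha>) (mono \<beta>)))))"

text \<open>f \<mapsto> f (x) 1, V_0 \<rightarrow> V_0 (x) A.\<close>
definition base_ext :: "(complex \<Rightarrow> 'a::comm_ring_1) \<Rightarrow> V0 \<Rightarrow> 'a V0A" where
  "base_ext emb f = (\<Sum>\<alpha>\<in>Poly_Mapping.keys f. Poly_Mapping.single \<alpha> (emb (Poly_Mapping.lookup f \<alpha>)))"

definition pderiv_var :: "nat \<Rightarrow> 'a::comm_ring_1 V0A \<Rightarrow> 'a V0A" where
  "pderiv_var i p = (\<Sum>\<alpha>\<in>Poly_Mapping.keys p.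
      Poly_Mapping.single (\<alpha> - Poly_Mapping.single i 1) (of_nat (Poly_Mapping.lookup \<alpha> i) * Poly_Mapping.lookup p \<alpha>))"

definition vars :: "'a::zero V0A \<Rightarrow> nat set" where
  "vars p = (\<Union>\<alpha>\<in>Poly_Mapping.keys p. Poly_Mapping.keys \<alpha>)"

text \<open>Q_p = \<Sum>_{m,n} q m n d^2/(dx_m dx_n); on a given polynomial only the finitely
  many variables occurring in it contribute.\<close>
definition Qop :: "(nat \<Rightarrow> nat \<Rightarrow> 'a::comm_ring_1) \<Rightarrow> 'a V0A \<Rightarrow> 'a V0A" where
  "Qop q p = (\<Sum>m\<in>vars p. \<Sum>n\<in>vars p.
      Poly_Mapping.single 0 (q m n) * pderiv_var m (pderiv_var n p))"

definition tdeg :: "'a::zero V0A \<Rightarrow> nat" where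
  "tdeg p = Max (insert 0 ((\<lambda>\<alpha>. sum (Poly_Mapping.lookup \<alpha>) (Poly_Mapping.keys \<alpha>)) ` Poly_Mapping.keys p))"

text \<open>e^{Q} = \<Sum>_k Q^k/k!, a finite sum on each polynomial (Q lowers degree by 2,
  so Q^k p = 0 for k > tdeg p); 1/k! acts through the C-algebra structure.\<close>
definition expQ :: "(complex \<Rightarrow> 'a::comm_ring_1) \<Rightarrow> (nat \<Rightarrow> nat \<Rightarrow> 'a) \<Rightarrow> 'a V0A \<Rightarrow> 'a V0A" where
  "expQ emb q p = (\<Sum>k\<le>tdeg p.
      Poly_Mapping.single 0 (emb (1 / of_nat (fact k))) * (Qop q ^^ k) p)"

end

theory Submission
  imports Defs
begin


abbreviation sg where "sg \<equiv> Poly_Mapping.single"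
abbreviation lk where "lk \<equiv> Poly_Mapping.lookup"
abbreviation ks where "ks \<equiv> Poly_Mapping.keys"
definition ee :: "nat \<Rightarrow> mon" where "ee i = Poly_Mapping.single i (1::nat)"

lemma lk_ee: "lk (ee i) n = (if i = n then 1 else 0)"
  by (simp add: ee_def lookup_single)

lemma ee_fold [simp]: "sg i (1::nat) = ee i" "sg i (Suc 0) = ee i"
  unfolding ee_def by simp_all

declare lk_ee [simp]

lemma keys_ee [simp]: "ks (ee i) = {i}"
  by (simp add: ee_def del: ee_fold)

lemma ee_neq0 [simp]: "ee i \<noteq> 0" "0 \<noteq> ee i"
  using lk_ee[of i i] by (metis lookup_zero one_neq_zero)+

lemma pair_zero [simp]: "(0::'a::zero, 0::'b::zero) = 0"
  by (simp add: zero_prod_def)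

lemma pm_expand: "u = (\<Sum>p\<in>ks u. sg p (lk u p))"
proof (rule poly_mapping_eqI)
  fix k
  show "lk u k = lk (\<Sum>p\<in>ks u. sg p (lk u p)) k"
    by (simp add: lookup_sum lookup_single when_def in_keys_iff)
qed

lemma additive_sum:
  assumes add: "\<And>a b. L (a + b) = L a + L b" and z: "L 0 = 0"
  shows "L (sum f S) = (\<Sum>x\<in>S. L (f x))"
  by (induction S rule: infinite_finite_induct) (simp_all add: z add)

lemma additive_ext:
  fixes u :: "'k \<Rightarrow>\<^sub>0 'v::comm_monoid_add" and La Lb :: "('k \<Rightarrow>\<^sub>0 'v) \<Rightarrow> 'w::comm_monoid_add"
  assumes add1: "\<And>a b. La (a + b) = La a + La b" and z1: "La 0 = 0"
    and add2: "\<And>a b. Lb (a + b) = Lb a + Lb b" and z2: "Lb 0 = 0"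
    and sgl: "\<And>p. p \<in> ks u \<Longrightarrow> La (sg p (lk u p)) = Lb (sg p (lk u p))"
  shows "La u = Lb u"
proof -
  have "La u = La (\<Sum>p\<in>ks u. sg p (lk u p))" by (subst pm_expand[of u], rule refl)
  also have "\<dots> = (\<Sum>p\<in>ks u. La (sg p (lk u p)))" by (rule additive_sum[OF add1 z1])
  also have "\<dots> = (\<Sum>p\<in>ks u. Lb (sg p (lk u p)))" using sgl by simp
  also have "\<dots> = Lb (\<Sum>p\<in>ks u. sg p (lk u p))" by (rule additive_sum[OF add2 z2, symmetric])
  also have "\<dots> = Lb u" by (subst pm_expand[of u], rule refl)
  finally show ?thesis .
qed

lemma additive_of_nat:
  fixes L :: "'r::comm_semiring_1 \<Rightarrow> 's::comm_semiring_1"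
  assumes add: "\<And>a b. L (a + b) = L a + L b" and z: "L 0 = 0"
  shows "L (of_nat k * u) = of_nat k * L u"
  by (induction k) (simp_all add: z add distrib_right)

lemma sum_keys_superset:
  assumes "finite S" "ks u \<subseteq> S" "\<And>p. \<phi> p 0 = 0"
  shows "(\<Sum>p\<in>ks u. \<phi> p (lk u p)) = (\<Sum>p\<in>S. \<phi> p (lk u p))"
  by (rule sum.mono_neutral_left) (use assms in \<open>auto simp: in_keys_iff\<close>)

lemma sum_keys_add:
  assumes "\<And>p. \<phi> p 0 = 0" "\<And>p x y. \<phi> p (x + y) = \<phi> p x + \<phi> p y"
  shows "(\<Sum>p\<in>ks (u + v). \<phi> p (lk (u + v) p)) = (\<Sum>p\<in>ks u. \<phi> p (lk u p)) + (\<Sum>p\<in>ks v. \<phi> p (lk v p))"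
proof -
  let ?S = "ks u \<union> ks v"
  have f: "finite ?S" by simp
  have "(\<Sum>p\<in>ks (u + v). \<phi> p (lk (u + v) p)) = (\<Sum>p\<in>?S. \<phi> p (lk (u + v) p))"
    by (rule sum_keys_superset[OF f keys_add[of u v]]) (rule assms(1))
  also have "\<dots> = (\<Sum>p\<in>?S. \<phi> p (lk u p)) + (\<Sum>p\<in>?S. \<phi> p (lk v p))"
    by (simp add: lookup_add assms(2) sum.distrib)
  also have "\<dots> = (\<Sum>p\<in>ks u. \<phi> p (lk u p)) + (\<Sum>p\<in>ks v. \<phi> p (lk v p))"
  proof -
    have "(\<Sum>p\<in>ks u. \<phi> p (lk u p)) = (\<Sum>p\<in>?S. \<phi> p (lk u p))"
      by (rule sum_keys_superset[OF f]) (auto intro: assms(1))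
    moreover have "(\<Sum>p\<in>ks v. \<phi> p (lk v p)) = (\<Sum>p\<in>?S. \<phi> p (lk v p))"
      by (rule sum_keys_superset[OF f]) (auto intro: assms(1))
    ultimately show ?thesis by simp
  qed
  finally show ?thesis .
qed

lemma sum_keys_single:
  assumes "\<And>p. \<phi> p 0 = 0"
  shows "(\<Sum>p\<in>ks (sg k c). \<phi> p (lk (sg k c) p)) = \<phi> k c"
  using assms by (simp add: lookup_single)

lemma sum_keys_zero: "(\<Sum>p\<in>ks 0. \<phi> p (lk 0 p)) = 0"
  by simp



definition monp :: "(nat \<Rightarrow> 'b::comm_semiring_1) \<Rightarrow> mon \<Rightarrow> 'b" where
  "monp s \<alpha> = (\<Prod>i\<in>ks \<alpha>. s i ^ lk \<alpha> i)"

lemma keys_add_nat: "ks (\<alpha> + \<beta>) = ks \<alpha> \<union> ks (\<beta> :: 'x \<Rightarrow>\<^sub>0 nat)"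
  by (auto simp: in_keys_iff lookup_add)

lemma monp_superset:
  assumes "finite S" "ks \<alpha> \<subseteq> S"
  shows "monp s \<alpha> = (\<Prod>i\<in>S. s i ^ lk \<alpha> i)"
  unfolding monp_def
  by (rule prod.mono_neutral_left) (use assms in \<open>auto simp: in_keys_iff\<close>)

lemma monp_zero [simp]: "monp s 0 = 1"
  by (simp add: monp_def)

lemma monp_add_e: "monp s (\<alpha> + ee i) = s i * monp s \<alpha>"
proof -
  let ?S = "insert i (ks \<alpha>)"
  have "monp s (\<alpha> + ee i) = (\<Prod>j\<in>?S. s j ^ lk (\<alpha> + ee i) j)"
    by (rule monp_superset) (auto simp: keys_add_nat)
  also have "\<dots> = (\<Prod>j\<in>?S. s j ^ lk \<alpha> j * s j ^ (if i = j then 1 else 0))"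
    by (rule prod.cong) (auto simp: lookup_add lookup_single power_add)
  also have "\<dots> = (\<Prod>j\<in>?S. s j ^ lk \<alpha> j) * (\<Prod>j\<in>?S. s j ^ (if i = j then 1 else 0))"
    by (rule prod.distrib)
  also have "(\<Prod>j\<in>?S. s j ^ (if i = j then 1 else 0)) = s i"
    by (subst prod.mono_neutral_left[of ?S "{i}", symmetric]) auto
  also have "(\<Prod>j\<in>?S. s j ^ lk \<alpha> j) = monp s \<alpha>"
    by (rule monp_superset[symmetric]) auto
  finally show ?thesis by (simp add: mult.commute)
qed

lemma peval_single:
  assumes "h 0 = 0"
  shows "peval h s (sg \<alpha> c) = h c * monp s \<alpha>"
  using assms by (simp add: peval_def monp_def lookup_single)

lemma peval_zero [simp]: "peval h s 0 = 0"
  by (simp add: peval_def)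

lemma peval_add:
  assumes "h 0 = 0" "\<And>x y. h (x + y) = h x + h y"
  shows "peval h s (u + v) = peval h s u + peval h s v"
  unfolding peval_def
  by (rule sum_keys_add[where \<phi> = "\<lambda>\<alpha> c. h c * (\<Prod>i\<in>ks \<alpha>. s i ^ lk \<alpha> i)"])
     (simp_all add: assms distrib_right)

definition Y3 :: "nat \<Rightarrow> V0V0V0" where
  "Y3 i = sg (ee i, 0, 0) 1 + sg (0, ee i, 0) 1 + sg (0, 0, ee i) 1"

definition Z2 :: "nat \<Rightarrow> V0V0" where
  "Z2 i = sg (ee i, 0) 1 + sg (0, ee i) 1"

lemma Delta2_single: "Delta2 (sg \<alpha> c) = sg 0 c * monp Y3 \<alpha>"
  unfolding Delta2_def Y3_def by (subst peval_single) auto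

lemma Delta2_add: "Delta2 (u + v) = Delta2 u + Delta2 v"
  unfolding Delta2_def by (rule peval_add) (auto simp: single_add)

lemma Delta2_mono: "Delta2 (mono \<alpha>) = monp Y3 \<alpha>"
  by (simp add: mono_def Delta2_single)

lemma Delta_single: "Delta (sg \<alpha> c) = sg 0 c * monp Z2 \<alpha>"
  unfolding Delta_def Z2_def by (subst peval_single) auto

lemma Delta_mono: "Delta (mono \<alpha>) = monp Z2 \<alpha>"
  by (simp add: mono_def Delta_single)

lemma counit_mono: "counit (mono \<alpha>) = (if \<alpha> = 0 then 1 else 0)"
proof (cases "\<alpha> = 0")
  case True then show ?thesis by (simp add: counit_def mono_def peval_def)
next
  case False
  then obtain i where "i \<in> ks \<alpha>" by (metis keys_eq_empty ex_in_conv)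
  then have "(\<Prod>j\<in>ks \<alpha>. (0::complex) ^ lk \<alpha> j) = 0"
    by (intro prod_zero) (auto simp: in_keys_iff)
  with False show ?thesis by (simp add: counit_def mono_def peval_single monp_def)
qed

lemma mono_add: "mono (\<alpha> + \<beta>) = mono \<alpha> * mono \<beta>"
  by (simp add: mono_def mult_single)

lemma var_mono: "var i = mono (ee i)"
  by (simp add: var_def mono_def)

lemma mono_zero: "mono 0 = 1"
  by (simp add: mono_def)

lemma tens_mono: "tens (mono \<alpha>) (mono \<beta>) = sg (\<alpha>, \<beta>) 1"
  by (simp add: tens_def mono_def lookup_single)

definition deg :: "mon \<Rightarrow> nat" where "deg \<alpha> = sum (lk \<alpha>) (ks \<alpha>)"

lemma deg_superset: "finite S \<Longrightarrow> ks \<alpha> \<subseteq> S \<Longrightarrow> deg \<alpha> = sum (lk \<alpha>) S"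
  unfolding deg_def by (rule sum.mono_neutral_left) (auto simp: in_keys_iff)

lemma deg_zero [simp]: "deg 0 = 0" by (simp add: deg_def)

lemma deg_add_e: "deg (\<alpha> + ee i) = Suc (deg \<alpha>)"
proof -
  let ?S = "insert i (ks \<alpha>)"
  have "deg (\<alpha> + ee i) = sum (lk (\<alpha> + ee i)) ?S"
    by (rule deg_superset) (auto simp: keys_add_nat)
  also have "\<dots> = sum (lk \<alpha>) ?S + sum (\<lambda>j. if i = j then 1 else 0) ?S"
    by (simp add: lookup_add lookup_single when_def sum.distrib)
  also have "sum (\<lambda>j. if i = j then 1 else 0) ?S = (1::nat)"
    by simp
  also have "sum (lk \<alpha>) ?S = deg \<alpha>"
    by (rule deg_superset[symmetric]) auto
  finally show ?thesis by simp
qed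

lemma sub_e_add: "0 < lk \<alpha> i \<Longrightarrow> (\<alpha> - ee i) + ee i = \<alpha>"
  by (rule poly_mapping_eqI) (auto simp: lookup_add lookup_minus lookup_single when_def)

lemma deg_sub_e: "0 < lk \<alpha> i \<Longrightarrow> deg (\<alpha> - ee i) = deg \<alpha> - 1"
  using deg_add_e[of "\<alpha> - ee i" i] sub_e_add[of \<alpha> i] by simp

lemma mon_induct:
  assumes "P 0" "\<And>\<alpha> i. P \<alpha> \<Longrightarrow> P (\<alpha> + ee i)"
  shows "P \<alpha>"
proof (induction "deg \<alpha>" arbitrary: \<alpha>)
  case 0
  then have "\<alpha> = 0" unfolding deg_def
    by (metis (mono_tags) finite_keys in_keys_iff keys_eq_empty sum_eq_0_iff ex_in_conv)
  then show ?case using assms(1) by simp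
next
  case (Suc d)
  then have "\<alpha> \<noteq> 0" by auto
  then obtain i where i: "i \<in> ks \<alpha>" by (metis keys_eq_empty ex_in_conv)
  then have pos: "0 < lk \<alpha> i" by (simp add: in_keys_iff)
  have "deg (\<alpha> - ee i) = d" using deg_sub_e[OF pos] Suc by simp
  then have "P (\<alpha> - ee i)" using Suc.hyps(1) by blast
  then have "P ((\<alpha> - ee i) + ee i)" by (rule assms(2))
  then show ?case using sub_e_add[OF pos] by metis
qed

lemma keys_sub_e: "ks (\<alpha> - ee i) \<subseteq> ks \<alpha>"
  by (auto simp: in_keys_iff lookup_minus)



definition pd :: "('k::{comm_monoid_add,minus} \<Rightarrow> nat) \<Rightarrow> 'k \<Rightarrow> ('k \<Rightarrow>\<^sub>0 'v::comm_semiring_1) \<Rightarrow> ('k \<Rightarrow>\<^sub>0 'v)" where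
  "pd w E u = (\<Sum>p\<in>ks u. sg (p - E) (of_nat (w p) * lk u p))"

lemma pd_single [simp]: "pd w E (sg p c) = sg (p - E) (of_nat (w p) * c)"
  unfolding pd_def by (subst sum_keys_single) auto

lemma pd_zero [simp]: "pd w E 0 = 0"
  by (simp add: pd_def)

lemma pd_add: "pd w E (u + v) = pd w E u + pd w E v"
  unfolding pd_def by (rule sum_keys_add) (simp_all add: distrib_left single_add)

lemma pd_sum: "pd w E (sum f S) = (\<Sum>x\<in>S. pd w E (f x))"
  by (rule additive_sum) (simp_all add: pd_add)

lemma pd_one:
  assumes "w 0 = 0"
  shows "pd w E (1::'k::{comm_monoid_add,minus} \<Rightarrow>\<^sub>0 'v::comm_semiring_1) = 0"
proof -
  have "pd w E (sg 0 (1::'v)) = 0" unfolding pd_single using assms by simp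
  then show ?thesis by simp
qed

lemma pd_mult_single:
  fixes u :: "'k::{comm_monoid_add,minus} \<Rightarrow>\<^sub>0 'v::comm_semiring_1"
  assumes hw: "\<And>p. w (K + p) = w K + w p"
    and h1: "\<And>p. 0 < w p \<Longrightarrow> K + p - E = K + (p - E)"
    and h2: "\<And>p. 0 < w K \<Longrightarrow> K + p - E = (K - E) + p"
  shows "pd w E (sg K 1 * u) = sg (K - E) (of_nat (w K)) * u + sg K 1 * pd w E u"
proof -
  have S: "pd w E (sg K 1 * sg p c) = sg (K - E) (of_nat (w K)) * sg p c + sg K 1 * pd w E (sg p c)" for p c
  proof (cases "w K = 0")
    case True
    then show ?thesis
      by (cases "w p = 0") (simp_all add: mult_single hw h1)
  next
    case False
    then show ?thesis
    proof (cases "w p = 0")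
      case True
      then show ?thesis using False by (simp add: mult_single hw h2)
    next
      case f2: False
      have "K + p - E = (K - E) + p" "K + p - E = K + (p - E)" using False f2 h1 h2 by auto
      then show ?thesis using False f2
        by (simp add: mult_single hw single_add[symmetric] distrib_right)
    qed
  qed
  show ?thesis
    by (rule additive_ext[where u = u and La = "\<lambda>u. pd w E (sg K 1 * u)"
    and Lb = "\<lambda>u. sg (K - E) (of_nat (w K)) * u + sg K 1 * pd w E u"])
      (simp_all add: pd_add distrib_left distrib_right S add_ac)
qed

lemma add_e_sub: "(\<alpha> + ee i) - ee i = \<alpha>"
  by (rule poly_mapping_eqI) (auto simp: lookup_add lookup_minus lookup_single when_def)

lemma add_e_sub_ne: "i \<noteq> n \<Longrightarrow> (\<alpha> + ee i) - ee n = (\<alpha> - ee n) + ee i"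
  by (rule poly_mapping_eqI) (auto simp: lookup_add lookup_minus lookup_single when_def)

lemma D_generic:
  fixes P :: "'r::comm_semiring_1 \<Rightarrow> 'r"
  assumes P1: "P 1 = 0"
    and PY: "\<And>i u. P (Y i * u) = (if i = n then u else 0) + Y i * P u"
  shows "P (monp Y \<alpha>) = of_nat (lk \<alpha> n) * monp Y (\<alpha> - ee n)"
proof (induction \<alpha> rule: mon_induct)
  case 1
  then show ?case by (simp add: P1)
next
  case (2 \<alpha> i)
  have m: "monp Y (\<alpha> + ee i) = Y i * monp Y \<alpha>" by (rule monp_add_e)
  have B: "P (monp Y (\<alpha> + ee i)) = (if i = n then monp Y \<alpha> else 0) + Y i * (of_nat (lk \<alpha> n) * monp Y (\<alpha> - ee n))"
    unfolding m PY 2 by simp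
  show ?case
  proof (cases "i = n")
    case True
    have l: "lk (\<alpha> + ee i) n = lk \<alpha> n + 1" using True by (simp add: lookup_add)
    have s: "(\<alpha> + ee i) - ee n = \<alpha>" unfolding True by (rule add_e_sub)
    have A: "P (monp Y (\<alpha> + ee i)) = monp Y \<alpha> + Y n * (of_nat (lk \<alpha> n) * monp Y (\<alpha> - ee n))"
      using B True by simp
    show ?thesis
    proof (cases "lk \<alpha> n = 0")
      case True
      with A show ?thesis unfolding l s by simp
    next
      case False
      then have "Y n * monp Y (\<alpha> - ee n) = monp Y \<alpha>"
        using monp_add_e[of Y "\<alpha> - ee n" n] sub_e_add[of \<alpha> n] by simp
      have "P (monp Y (\<alpha> + ee i)) = monp Y \<alpha> + of_nat (lk \<alpha> n) * (Y n * monp Y (\<alpha> - ee n))"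
        using A by (simp only: mult.left_commute)
      also have "\<dots> = of_nat (lk \<alpha> n + 1) * monp Y \<alpha>"
        unfolding \<open>Y n * monp Y (\<alpha> - ee n) = monp Y \<alpha>\<close> by (simp add: algebra_simps)
      finally show ?thesis unfolding l s .
    qed
  next
    case False
    have l: "lk (\<alpha> + ee i) n = lk \<alpha> n" using False by (simp add: lookup_add lookup_single)
    have s: "(\<alpha> + ee i) - ee n = (\<alpha> - ee n) + ee i" using False by (rule add_e_sub_ne)
    have "P (monp Y (\<alpha> + ee i)) = Y i * (of_nat (lk \<alpha> n) * monp Y (\<alpha> - ee n))"
      using B False by simp
    also have "\<dots> = of_nat (lk \<alpha> n) * monp Y ((\<alpha> - ee n) + ee i)"
      by (simp only: monp_add_e mult.left_commute)
    finally show ?thesis unfolding l s .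
  qed
qed



lemma mon_shift1: "0 < lk a n \<Longrightarrow> (x::mon) + a - ee n = x + (a - ee n)"
  by (rule poly_mapping_eqI) (auto simp: lookup_add lookup_minus lookup_single when_def)

lemma mon_shift2: "0 < lk x n \<Longrightarrow> (x::mon) + a - ee n = (x - ee n) + a"
  by (rule poly_mapping_eqI) (auto simp: lookup_add lookup_minus lookup_single when_def)


lemma ee_sub_self: "ee n - ee n = 0"
  by (rule poly_mapping_eqI) (simp add: lookup_minus)

abbreviation pd31 :: "nat \<Rightarrow> V0V0V0 \<Rightarrow> V0V0V0" where
  "pd31 n \<equiv> pd (\<lambda>p. lk (fst p) n) (ee n, 0, 0)"
abbreviation pd32 :: "nat \<Rightarrow> V0V0V0 \<Rightarrow> V0V0V0" where
  "pd32 n \<equiv> pd (\<lambda>p. lk (fst (snd p)) n) (0, ee n, 0)"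
abbreviation pd21 :: "nat \<Rightarrow> V0V0 \<Rightarrow> V0V0" where
  "pd21 n \<equiv> pd (\<lambda>p. lk (fst p) n) (ee n, 0)"

lemma sg_if_mult: "sg k (of_nat (if b then 1 else 0)) * u = (if b then sg k 1 * u else 0)"
  by simp

lemma pd31_ms: "pd31 n (sg K 1 * u) = sg (K - (ee n, 0, 0)) (of_nat (lk (fst K) n)) * u + sg K 1 * pd31 n u"
proof -
  obtain ka kb kc where K: "K = (ka, kb, kc)" by (cases K) auto
  have h1: "lk (fst (K + p)) n = lk (fst K) n + lk (fst p) n" for p by (simp add: lookup_add)
  have h2: "K + p - (ee n, 0, 0) = K + (p - (ee n, 0, 0))" if "0 < lk (fst p) n" for p :: "mon\<times>mon\<times>mon"
  proof -
    have "ka + fst p - ee n = ka + (fst p - ee n)" using that by (intro mon_shift1) simp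
    then show ?thesis by (cases p) (simp add: K)
  qed
  have h3: "K + p - (ee n, 0, 0) = (K - (ee n, 0, 0)) + p" if "0 < lk (fst K) n" for p :: "mon\<times>mon\<times>mon"
  proof -
    have "ka + fst p - ee n = (ka - ee n) + fst p" using that K by (intro mon_shift2) simp
    then show ?thesis by (cases p) (simp add: K)
  qed
  show ?thesis by (rule pd_mult_single[of "\<lambda>p. lk (fst p) n", OF h1 h2 h3])
qed

lemma pd32_ms: "pd32 n (sg K 1 * u) = sg (K - (0, ee n, 0)) (of_nat (lk (fst (snd K)) n)) * u + sg K 1 * pd32 n u"
proof -
  obtain ka kb kc where K: "K = (ka, kb, kc)" by (cases K) auto
  have h1: "lk (fst (snd (K + p))) n = lk (fst (snd K)) n + lk (fst (snd p)) n" for p by (simp add: lookup_add)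
  have h2: "K + p - (0, ee n, 0) = K + (p - (0, ee n, 0))" if "0 < lk (fst (snd p)) n" for p :: "mon\<times>mon\<times>mon"
  proof -
    have "kb + fst (snd p) - ee n = kb + (fst (snd p) - ee n)" using that by (intro mon_shift1) simp
    then show ?thesis by (cases p) (simp add: K)
  qed
  have h3: "K + p - (0, ee n, 0) = (K - (0, ee n, 0)) + p" if "0 < lk (fst (snd K)) n" for p :: "mon\<times>mon\<times>mon"
  proof -
    have "kb + fst (snd p) - ee n = (kb - ee n) + fst (snd p)" using that K by (intro mon_shift2) simp
    then show ?thesis by (cases p) (simp add: K)
  qed
  show ?thesis by (rule pd_mult_single[of "\<lambda>p. lk (fst (snd p)) n", OF h1 h2 h3])
qed

lemma pd21_ms: "pd21 n (sg K 1 * u) = sg (K - (ee n, 0)) (of_nat (lk (fst K) n)) * u + sg K 1 * pd21 n u"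
proof -
  obtain ka kb where K: "K = (ka, kb)" by (cases K) auto
  have h1: "lk (fst (K + p)) n = lk (fst K) n + lk (fst p) n" for p by (simp add: lookup_add)
  have h2: "K + p - (ee n, 0) = K + (p - (ee n, 0))" if "0 < lk (fst p) n" for p :: "mon\<times>mon"
  proof -
    have "ka + fst p - ee n = ka + (fst p - ee n)" using that by (intro mon_shift1) simp
    then show ?thesis by (cases p) (simp add: K)
  qed
  have h3: "K + p - (ee n, 0) = (K - (ee n, 0)) + p" if "0 < lk (fst K) n" for p :: "mon\<times>mon"
  proof -
    have "ka + fst p - ee n = (ka - ee n) + fst p" using that K by (intro mon_shift2) simp
    then show ?thesis by (cases p) (simp add: K)
  qed
  show ?thesis by (rule pd_mult_single[of "\<lambda>p. lk (fst p) n", OF h1 h2 h3])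
qed

lemma pd31_Y: "pd31 n (Y3 i * u) = (if i = n then u else 0) + Y3 i * pd31 n u"
  unfolding Y3_def distrib_right pd_add pd31_ms
  by (simp add: ee_sub_self algebra_simps)

lemma pd32_Y: "pd32 n (Y3 i * u) = (if i = n then u else 0) + Y3 i * pd32 n u"
  unfolding Y3_def distrib_right pd_add pd32_ms
  by (simp add: ee_sub_self algebra_simps)

lemma pd21_Z: "pd21 n (Z2 i * u) = (if i = n then u else 0) + Z2 i * pd21 n u"
  unfolding Z2_def distrib_right pd_add pd21_ms
  by (simp add: ee_sub_self algebra_simps)

lemma pd_one0: "pd w E (1::'k::{comm_monoid_add,minus} \<Rightarrow>\<^sub>0 'v::comm_semiring_1) = 0" if "w 0 = 0"
  using pd_one that by blast

lemma D31: "pd31 n (monp Y3 \<alpha>) = of_nat (lk \<alpha> n) * monp Y3 (\<alpha> - ee n)"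
  apply (rule D_generic[where P = "pd31 n"])
   apply (rule pd_one, simp)
  apply (rule pd31_Y)
  done

lemma D32: "pd32 n (monp Y3 \<alpha>) = of_nat (lk \<alpha> n) * monp Y3 (\<alpha> - ee n)"
  apply (rule D_generic[where P = "pd32 n"])
   apply (rule pd_one, simp)
  apply (rule pd32_Y)
  done

lemma D21: "pd21 n (monp Z2 \<alpha>) = of_nat (lk \<alpha> n) * monp Z2 (\<alpha> - ee n)"
  apply (rule D_generic[where P = "pd21 n"])
   apply (rule pd_one, simp)
  apply (rule pd21_Z)
  done



lemma keys_Z2: "ks (Z2 i) \<subseteq> {(ee i, 0), (0, ee i)}"
  unfolding Z2_def using keys_add[of "sg (ee i, 0) (1::complex)" "sg (0, ee i) 1"] by auto

lemma keys_Y3: "ks (Y3 i) \<subseteq> {(ee i, 0, 0), (0, ee i, 0), (0, 0, ee i)}"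
  unfolding Y3_def
  using keys_add[of "sg (ee i, 0, 0) (1::complex) + sg (0, ee i, 0) 1" "sg (0, 0, ee i) 1"]
    keys_add[of "sg (ee i, 0, 0) (1::complex)" "sg (0, ee i, 0) 1"] by auto

lemma keys_monpZ2: "p \<in> ks (monp Z2 b) \<Longrightarrow> ks (fst p) \<union> ks (snd p) \<subseteq> ks b"
proof (induction b arbitrary: p rule: mon_induct)
  case 1
  then show ?case by simp
next
  case (2 \<alpha> i)
  from 2(2) have "p \<in> ks (Z2 i * monp Z2 \<alpha>)" by (simp add: monp_add_e)
  then obtain x y where xy: "x \<in> ks (Z2 i)" "y \<in> ks (monp Z2 \<alpha>)" "p = x + y"
    using keys_mult by blast
  have y: "ks (fst y) \<union> ks (snd y) \<subseteq> ks \<alpha>" using 2(1) xy(2) by blast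
  from xy(1) keys_Z2 have "x = (ee i, 0) \<or> x = (0, ee i)" by blast
  then show ?case using y xy(3) by (auto simp: keys_add_nat)
qed

lemma keys_monpY3: "p \<in> ks (monp Y3 b) \<Longrightarrow> ks (fst p) \<union> ks (fst (snd p)) \<union> ks (snd (snd p)) \<subseteq> ks b"
proof (induction b arbitrary: p rule: mon_induct)
  case 1
  then show ?case by simp
next
  case (2 \<alpha> i)
  from 2(2) have "p \<in> ks (Y3 i * monp Y3 \<alpha>)" by (simp add: monp_add_e)
  then obtain x y where xy: "x \<in> ks (Y3 i)" "y \<in> ks (monp Y3 \<alpha>)" "p = x + y"
    using keys_mult by blast
  have y: "ks (fst y) \<union> ks (fst (snd y)) \<union> ks (snd (snd y)) \<subseteq> ks \<alpha>" using 2(1) xy(2) by blast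
  from xy(1) keys_Y3 have "x = (ee i, 0, 0) \<or> x = (0, ee i, 0) \<or> x = (0, 0, ee i)" by blast
  then show ?case using y xy(3) by (auto simp: keys_add_nat)
qed

lemma sweedler2_add: "h 0 = 0 \<Longrightarrow> (\<And>x y. h (x + y) = h x + h y) \<Longrightarrow>
   sweedler2 h \<Phi> (u + v) = sweedler2 h \<Phi> u + sweedler2 h \<Phi> v"
  unfolding sweedler2_def by (rule sum_keys_add) (simp_all add: distrib_right)

lemma sweedler2_single: "h 0 = 0 \<Longrightarrow> sweedler2 h \<Phi> (sg p c) = h c * \<Phi> (mono (fst p)) (mono (snd p))"
  unfolding sweedler2_def by (subst sum_keys_single) simp_all

lemma ee_eq_iff [simp]: "ee m = ee n \<longleftrightarrow> m = n"
  by (metis lk_ee one_neq_zero)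

lemma ee_add_neq0: "ee j + \<mu> \<noteq> 0"
proof
  assume "ee j + \<mu> = 0"
  then have "lk (ee j + \<mu>) j = 0" by simp
  then show False by (simp add: lookup_add)
qed

locale BC =
  fixes emb :: "complex \<Rightarrow> 'a::comm_ring_1" and r :: "V0V0 \<Rightarrow> 'a"
  assumes hom: "calg_hom emb" and bc: "bichar emb r"
begin

lemma emb_add: "emb (x + y) = emb x + emb y" using hom by (simp add: calg_hom_def)
lemma emb_mult: "emb (x * y) = emb x * emb y" using hom by (simp add: calg_hom_def)
lemma emb_1 [simp]: "emb 1 = 1" using hom by (simp add: calg_hom_def)
lemma emb_0 [simp]: "emb 0 = 0"
  using emb_add[of 0 0] by simp
lemma emb_of_nat [simp]: "emb (of_nat k) = of_nat k"
  by (induction k) (simp_all add: emb_add)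

lemma r_tens1L: "r (tens 1 a) = emb (counit a)" using bc by (simp add: bichar_def)
lemma r_tens1R: "r (tens a 1) = emb (counit a)" using bc by (simp add: bichar_def)
lemma r_multL: "r (tens (a * b) c) = sweedler2 emb (\<lambda>c' c''. r (tens a c') * r (tens b c'')) (Delta c)"
  using bc by (simp add: bichar_def)
lemma r_multR: "r (tens a (b * c)) = sweedler2 emb (\<lambda>a' a''. r (tens a' b) * r (tens a'' c)) (Delta a)"
  using bc by (simp add: bichar_def)

definition R :: "mon \<Rightarrow> mon \<Rightarrow> 'a" where "R a b = r (tens (mono a) (mono b))"
definition q :: "nat \<Rightarrow> nat \<Rightarrow> 'a" where "q m n = r (tens (var m) (var n))"

lemma sw_add: "sweedler2 emb \<Phi> (u + v) = sweedler2 emb \<Phi> u + sweedler2 emb \<Phi> v"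
  by (rule sweedler2_add) (simp_all add: emb_add)

lemma sw_single: "sweedler2 emb \<Phi> (sg p c) = emb c * \<Phi> (mono (fst p)) (mono (snd p))"
  by (rule sweedler2_single) simp

lemma Delta_var: "Delta (var i) = Z2 i"
  using monp_add_e[of Z2 0 i] by (simp add: var_mono Delta_mono)

lemma counit_var: "counit (var i) = 0"
  by (simp add: var_mono counit_mono)

lemma split_mon:
  assumes "\<mu> \<noteq> 0" "\<forall>n. \<mu> \<noteq> ee n"
  obtains m \<nu> where "\<mu> = ee m + \<nu>" "\<nu> \<noteq> 0"
proof -
  obtain m where m: "m \<in> ks \<mu>" using assms(1) by (metis keys_eq_empty ex_in_conv)
  then have pos: "0 < lk \<mu> m" by (simp add: in_keys_iff)
  have e: "\<mu> = ee m + (\<mu> - ee m)" using sub_e_add[OF pos] by (simp add: add.commute)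
  have "\<mu> - ee m \<noteq> 0"
  proof
    assume "\<mu> - ee m = 0"
    with e have "\<mu> = ee m" by simp
    with assms(2) show False by blast
  qed
  with e show ?thesis using that by blast
qed

lemma sum_ee_delta:
  assumes "finite V" "ks \<mu> \<subseteq> V"
  shows "(\<Sum>n\<in>V. if \<mu> = ee n then f n else 0) = (if \<exists>n. \<mu> = ee n then f (THE n. \<mu> = ee n) else 0)"
proof (cases "\<exists>n. \<mu> = ee n")
  case True
  then obtain m where m: "\<mu> = ee m" by blast
  then have "m \<in> V" using assms(2) by simp
  have "(\<Sum>n\<in>V. if \<mu> = ee n then f n else 0) = (\<Sum>n\<in>V. if m = n then f n else 0)"
    using m by simp
  also have "\<dots> = f m" using \<open>m \<in> V\<close> assms(1) by simp
  finally show ?thesis using m by simp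
next
  case False
  then show ?thesis by simp
qed

lemma rhoL:
  assumes V: "finite V" "ks \<mu> \<subseteq> V"
  shows "r (tens (var i) (mono \<mu>)) = (\<Sum>n\<in>V. if \<mu> = ee n then q i n else 0)"
proof -
  consider "\<mu> = 0" | m where "\<mu> = ee m" | "\<mu> \<noteq> 0" "\<forall>n. \<mu> \<noteq> ee n" by blast
  then show ?thesis
  proof cases
    case 1
    then show ?thesis by (simp add: mono_zero r_tens1R counit_var)
  next
    case (2 m)
    then show ?thesis unfolding sum_ee_delta[OF V] by (simp add: q_def var_mono)
  next
    case 3
    then obtain m \<nu> where mn: "\<mu> = ee m + \<nu>" "\<nu> \<noteq> 0" by (rule split_mon)
    have "r (tens (var i) (mono \<mu>)) = r (tens (var i) (var m * mono \<nu>))"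
      by (simp add: mn mono_add var_mono)
    also have "\<dots> = 0"
      unfolding r_multR Delta_var Z2_def sw_add sw_single
      using mn(2) by (simp add: mono_zero r_tens1L counit_mono counit_var)
    finally show ?thesis using 3 by simp
  qed
qed

lemma rhoR:
  assumes V: "finite V" "ks \<mu> \<subseteq> V"
  shows "r (tens (mono \<mu>) (var i)) = (\<Sum>m\<in>V. if \<mu> = ee m then q m i else 0)"
proof -
  consider "\<mu> = 0" | m where "\<mu> = ee m" | "\<mu> \<noteq> 0" "\<forall>n. \<mu> \<noteq> ee n" by blast
  then show ?thesis
  proof cases
    case 1
    then show ?thesis by (simp add: mono_zero r_tens1L counit_var)
  next
    case (2 m)
    then show ?thesis unfolding sum_ee_delta[OF V] by (simp add: q_def var_mono)
  next
    case 3
    then obtain m \<nu> where mn: "\<mu> = ee m + \<nu>" "\<nu> \<noteq> 0" by (rule split_mon)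
    have "r (tens (mono \<mu>) (var i)) = r (tens (var m * mono \<nu>) (var i))"
      by (simp add: mn mono_add var_mono)
    also have "\<dots> = 0"
      unfolding r_multL Delta_var Z2_def sw_add sw_single
      using mn(2) by (simp add: mono_zero r_tens1R counit_mono counit_var)
    finally show ?thesis using 3 by simp
  qed
qed

end



context BC
begin

definition T0 :: "(mon \<Rightarrow> 'a) \<Rightarrow> V0V0 \<Rightarrow> 'a" where
  "T0 g u = (\<Sum>p\<in>ks u. emb (lk u p) * (if fst p = 0 then g (snd p) else 0))"

lemma T0_add: "T0 g (u + v) = T0 g u + T0 g v"
  unfolding T0_def by (rule sum_keys_add) (simp_all add: emb_add distrib_right)

lemma T0_single: "T0 g (sg p c) = emb c * (if fst p = 0 then g (snd p) else 0)"
  unfolding T0_def by (subst sum_keys_single) simp_all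

lemma T0_zero: "T0 g 0 = 0" by (simp add: T0_def)

lemma T0_of_nat: "T0 g (of_nat k * u) = of_nat k * T0 g u"
  by (rule additive_of_nat) (simp_all add: T0_add T0_zero)

lemma T0_Z2: "T0 g (Z2 j * u) = T0 (\<lambda>\<nu>. g (ee j + \<nu>)) u"
proof (rule additive_ext[where u = u and La = "\<lambda>u. T0 g (Z2 j * u)" and Lb = "T0 (\<lambda>\<nu>. g (ee j + \<nu>))"])
  fix p assume "p \<in> ks u"
  obtain \<mu> \<nu> where p: "p = (\<mu>, \<nu>)" by (cases p)
  show "T0 g (Z2 j * sg p (lk u p)) = T0 (\<lambda>\<nu>. g (ee j + \<nu>)) (sg p (lk u p))"
    unfolding Z2_def distrib_right mult_single T0_add T0_single p
    by (simp add: ee_add_neq0)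
qed (simp_all add: T0_add T0_zero distrib_left)

lemma T0_monp: "T0 g (monp Z2 \<beta>) = g \<beta>"
proof (induction \<beta> arbitrary: g rule: mon_induct)
  case 1
  have "T0 g (sg 0 1) = g 0" by (simp only: T0_single) simp
  then show ?case by simp
next
  case (2 \<alpha> i)
  show ?case by (simp add: monp_add_e T0_Z2 2 add.commute)
qed

lemma Tn_eq:
  "(\<Sum>p\<in>ks u. emb (lk u p) * (if fst p = ee n then g (snd p) else 0)) = T0 g (pd21 n u)"
proof (rule additive_ext[where u = u and La = "\<lambda>u. \<Sum>p\<in>ks u. emb (lk u p) * (if fst p = ee n then g (snd p) else 0)"
      and Lb = "\<lambda>u. T0 g (pd21 n u)"])
  fix p assume "p \<in> ks u"
  obtain \<mu> \<nu> where p: "p = (\<mu>, \<nu>)" by (cases p)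
  define c where "c = lk u (\<mu>, \<nu>)"
  have L: "(\<Sum>x\<in>ks (sg (\<mu>, \<nu>) c). emb (lk (sg (\<mu>, \<nu>) c) x) * (if fst x = ee n then g (snd x) else 0))
      = emb c * (if \<mu> = ee n then g \<nu> else 0)"
    by (subst sum_keys_single) simp_all
  have Rr: "T0 g (pd21 n (sg (\<mu>, \<nu>) c)) = emb (of_nat (lk \<mu> n) * c) * (if \<mu> - ee n = 0 then g \<nu> else 0)"
    by (simp add: T0_single)
  have "emb c * (if \<mu> = ee n then g \<nu> else 0) = emb (of_nat (lk \<mu> n) * c) * (if \<mu> - ee n = 0 then g \<nu> else 0)"
  proof (cases "\<mu> = ee n")
    case True
    then show ?thesis by (simp add: ee_sub_self)
  next
    case False
    show ?thesis
    proof (cases "lk \<mu> n = 0")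
      case True
      then show ?thesis using False by simp
    next
      case f2: False
      have "\<mu> - ee n \<noteq> 0"
      proof
        assume "\<mu> - ee n = 0"
        then have "\<mu> = ee n" using sub_e_add[of \<mu> n] f2 by simp
        with False show False by simp
      qed
      then show ?thesis using False by simp
    qed
  qed
  then show "(\<Sum>x\<in>ks (sg p (lk u p)). emb (lk (sg p (lk u p)) x) * (if fst x = ee n then g (snd x) else 0))
      = T0 g (pd21 n (sg p (lk u p)))"
    unfolding p c_def[symmetric] L Rr .
next
  fix a b :: V0V0
  show "(\<Sum>p\<in>ks (a + b). emb (lk (a + b) p) * (if fst p = ee n then g (snd p) else 0)) =
    (\<Sum>p\<in>ks a. emb (lk a p) * (if fst p = ee n then g (snd p) else 0)) +
    (\<Sum>p\<in>ks b. emb (lk b p) * (if fst p = ee n then g (snd p) else 0))"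
    by (rule sum_keys_add) (simp_all add: emb_add distrib_right)
qed (simp_all add: T0_add T0_zero pd_add)

lemma SW:
  assumes V: "finite V" "ks b \<subseteq> V"
    and rho: "\<And>\<mu>. ks \<mu> \<subseteq> V \<Longrightarrow> \<rho> (mono \<mu>) = (\<Sum>n\<in>V. if \<mu> = ee n then w n else 0)"
  shows "sweedler2 emb (\<lambda>c' c''. \<rho> c' * G c'') (Delta (mono b))
       = (\<Sum>n\<in>V. w n * of_nat (lk b n) * G (mono (b - ee n)))"
proof -
  let ?u = "monp Z2 b"
  have "sweedler2 emb (\<lambda>c' c''. \<rho> c' * G c'') (Delta (mono b))
      = (\<Sum>p\<in>ks ?u. emb (lk ?u p) * (\<rho> (mono (fst p)) * G (mono (snd p))))"
    by (simp add: sweedler2_def Delta_mono)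
  also have "\<dots> = (\<Sum>p\<in>ks ?u. emb (lk ?u p) * ((\<Sum>n\<in>V. if fst p = ee n then w n else 0) * G (mono (snd p))))"
  proof (rule sum.cong[OF refl])
    fix p assume "p \<in> ks ?u"
    then have "ks (fst p) \<subseteq> V" using keys_monpZ2[of p b] V(2) by blast
    then show "emb (lk ?u p) * (\<rho> (mono (fst p)) * G (mono (snd p))) =
      emb (lk ?u p) * ((\<Sum>n\<in>V. if fst p = ee n then w n else 0) * G (mono (snd p)))"
      by (simp add: rho)
  qed
  also have "\<dots> = (\<Sum>p\<in>ks ?u. \<Sum>n\<in>V. w n * (emb (lk ?u p) * (if fst p = ee n then G (mono (snd p)) else 0)))"
    by (rule sum.cong[OF refl]) (simp add: sum_distrib_left sum_distrib_right algebra_simps if_distrib if_distribR cong: if_cong)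
  also have "\<dots> = (\<Sum>n\<in>V. w n * (\<Sum>p\<in>ks ?u. emb (lk ?u p) * (if fst p = ee n then G (mono (snd p)) else 0)))"
    by (subst sum.swap) (simp add: sum_distrib_left)
  also have "\<dots> = (\<Sum>n\<in>V. w n * T0 (\<lambda>\<nu>. G (mono \<nu>)) (pd21 n ?u))"
  proof (rule sum.cong[OF refl])
    fix n
    show "w n * (\<Sum>p\<in>ks ?u. emb (lk ?u p) * (if fst p = ee n then G (mono (snd p)) else 0))
      = w n * T0 (\<lambda>\<nu>. G (mono \<nu>)) (pd21 n ?u)"
      using Tn_eq[of ?u n "\<lambda>\<nu>. G (mono \<nu>)"] by simp
  qed
  also have "\<dots> = (\<Sum>n\<in>V. w n * of_nat (lk b n) * G (mono (b - ee n)))"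
    by (simp add: D21 T0_of_nat T0_monp mult.assoc)
  finally show ?thesis .
qed

end



lemma sg_sum: "sg k (sum f S) = (\<Sum>x\<in>S. sg k (f x))"
  by (rule additive_sum) (simp_all add: single_add)

context BC
begin

lemma R1:
  assumes V: "finite V" "ks b \<subseteq> V"
  shows "R (ee i + a) b = (\<Sum>n\<in>V. q i n * of_nat (lk b n) * R a (b - ee n))"
proof -
  have "R (ee i + a) b = r (tens (var i * mono a) (mono b))"
    by (simp add: R_def mono_add var_mono)
  also have "\<dots> = sweedler2 emb (\<lambda>c' c''. r (tens (var i) c') * r (tens (mono a) c'')) (Delta (mono b))"
    by (rule r_multL)
  also have "\<dots> = (\<Sum>n\<in>V. q i n * of_nat (lk b n) * r (tens (mono a) (mono (b - ee n))))"
    by (rule SW[OF V]) (rule rhoL[OF V(1)])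
  finally show ?thesis by (simp add: R_def)
qed

lemma R2:
  assumes V: "finite V" "ks a \<subseteq> V"
  shows "R a (ee i + b) = (\<Sum>m\<in>V. q m i * of_nat (lk a m) * R (a - ee m) b)"
proof -
  have "R a (ee i + b) = r (tens (mono a) (var i * mono b))"
    by (simp add: R_def mono_add var_mono)
  also have "\<dots> = sweedler2 emb (\<lambda>a' a''. r (tens a' (var i)) * r (tens a'' (mono b))) (Delta (mono a))"
    by (rule r_multR)
  also have "\<dots> = (\<Sum>m\<in>V. q m i * of_nat (lk a m) * r (tens (mono (a - ee m)) (mono b)))"
    by (rule SW[OF V]) (rule rhoR[OF V(1)])
  finally show ?thesis by (simp add: R_def)
qed

definition Phi :: "V0V0V0 \<Rightarrow> 'a V0A" where
  "Phi u = (\<Sum>p\<in>ks u. sg (snd (snd p)) (emb (lk u p) * R (fst p) (fst (snd p))))"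

lemma EQ_Phi: "EQ emb r f = Phi (Delta2 f)"
  unfolding EQ_def Phi_def Let_def R_def by (simp add: split_beta)

lemma Phi_add: "Phi (u + v) = Phi u + Phi v"
  unfolding Phi_def by (rule sum_keys_add) (simp_all add: emb_add distrib_right single_add)

lemma Phi_single: "Phi (sg p c) = sg (snd (snd p)) (emb c * R (fst p) (fst (snd p)))"
  unfolding Phi_def by (subst sum_keys_single) simp_all

lemma Phi_zero: "Phi 0 = 0" by (simp add: Phi_def)

lemma Phi_sum: "Phi (sum f S) = (\<Sum>x\<in>S. Phi (f x))"
  by (rule additive_sum) (simp_all add: Phi_add Phi_zero)

lemma Phi_scal: "Phi (sg 0 c * u) = sg 0 (emb c) * Phi u"
proof (rule additive_ext[where u = u and La = "\<lambda>u. Phi (sg 0 c * u)" and Lb = "\<lambda>u. sg 0 (emb c) * Phi u"])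
  fix p assume "p \<in> ks u"
  show "Phi (sg 0 c * sg p (lk u p)) = sg 0 (emb c) * Phi (sg p (lk u p))"
    by (simp add: mult_single Phi_single emb_mult mult.assoc)
qed (simp_all add: Phi_add Phi_zero distrib_left)

lemma Phi_of_nat: "Phi (of_nat k * u) = of_nat k * Phi u"
  by (rule additive_of_nat) (simp_all add: Phi_add Phi_zero)

lemma Phi_X3: "Phi (sg (0, 0, ee i) 1 * u) = sg (ee i) 1 * Phi u"
proof (rule additive_ext[where u = u and La = "\<lambda>u. Phi (sg (0, 0, ee i) 1 * u)" and Lb = "\<lambda>u. sg (ee i) 1 * Phi u"])
  fix p assume "p \<in> ks u"
  show "Phi (sg (0, 0, ee i) 1 * sg p (lk u p)) = sg (ee i) 1 * Phi (sg p (lk u p))"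
    by (simp add: mult_single Phi_single)
qed (simp_all add: Phi_add Phi_zero distrib_left)

lemma Phi_X1:
  assumes V: "finite V" and K: "\<And>p. p \<in> ks u \<Longrightarrow> ks (fst (snd p)) \<subseteq> V"
  shows "Phi (sg (ee i, 0, 0) 1 * u) = (\<Sum>n\<in>V. sg 0 (q i n) * Phi (pd32 n u))"
proof (rule additive_ext[where u = u and La = "\<lambda>u. Phi (sg (ee i, 0, 0) 1 * u)"
      and Lb = "\<lambda>u. \<Sum>n\<in>V. sg 0 (q i n) * Phi (pd32 n u)"])
  fix p assume p: "p \<in> ks u"
  obtain \<mu> \<nu> \<gamma> where pp: "p = (\<mu>, \<nu>, \<gamma>)" by (cases p) auto
  define c where "c = lk u (\<mu>, \<nu>, \<gamma>)"
  have kv: "ks \<nu> \<subseteq> V" using K[OF p] pp by simp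
  have "Phi (sg (ee i, 0, 0) 1 * sg (\<mu>, \<nu>, \<gamma>) c) = sg \<gamma> (emb c * R (ee i + \<mu>) \<nu>)"
    by (simp add: mult_single Phi_single)
  also have "\<dots> = (\<Sum>n\<in>V. sg \<gamma> (emb c * (q i n * of_nat (lk \<nu> n) * R \<mu> (\<nu> - ee n))))"
    by (simp add: R1[OF V kv] sum_distrib_left sg_sum)
  also have "\<dots> = (\<Sum>n\<in>V. sg 0 (q i n) * Phi (pd32 n (sg (\<mu>, \<nu>, \<gamma>) c)))"
    by (rule sum.cong[OF refl]) (simp add: Phi_single mult_single emb_mult algebra_simps)
  finally show "Phi (sg (ee i, 0, 0) 1 * sg p (lk u p)) = (\<Sum>n\<in>V. sg 0 (q i n) * Phi (pd32 n (sg p (lk u p))))"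
    unfolding pp c_def .
qed (simp_all add: Phi_add Phi_zero distrib_left pd_add sum.distrib)

lemma Phi_X2:
  assumes V: "finite V" and K: "\<And>p. p \<in> ks u \<Longrightarrow> ks (fst p) \<subseteq> V"
  shows "Phi (sg (0, ee i, 0) 1 * u) = (\<Sum>m\<in>V. sg 0 (q m i) * Phi (pd31 m u))"
proof (rule additive_ext[where u = u and La = "\<lambda>u. Phi (sg (0, ee i, 0) 1 * u)"
      and Lb = "\<lambda>u. \<Sum>m\<in>V. sg 0 (q m i) * Phi (pd31 m u)"])
  fix p assume p: "p \<in> ks u"
  obtain \<mu> \<nu> \<gamma> where pp: "p = (\<mu>, \<nu>, \<gamma>)" by (cases p) auto
  define c where "c = lk u (\<mu>, \<nu>, \<gamma>)"
  have kv: "ks \<mu> \<subseteq> V" using K[OF p] pp by simp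
  have "Phi (sg (0, ee i, 0) 1 * sg (\<mu>, \<nu>, \<gamma>) c) = sg \<gamma> (emb c * R \<mu> (ee i + \<nu>))"
    by (simp add: mult_single Phi_single)
  also have "\<dots> = (\<Sum>m\<in>V. sg \<gamma> (emb c * (q m i * of_nat (lk \<mu> m) * R (\<mu> - ee m) \<nu>)))"
    by (simp add: R2[OF V kv] sum_distrib_left sg_sum)
  also have "\<dots> = (\<Sum>m\<in>V. sg 0 (q m i) * Phi (pd31 m (sg (\<mu>, \<nu>, \<gamma>) c)))"
    by (rule sum.cong[OF refl]) (simp add: Phi_single mult_single emb_mult algebra_simps)
  finally show "Phi (sg (0, ee i, 0) 1 * sg p (lk u p)) = (\<Sum>m\<in>V. sg 0 (q m i) * Phi (pd31 m (sg p (lk u p))))"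
    unfolding pp c_def .
qed (simp_all add: Phi_add Phi_zero distrib_left pd_add sum.distrib)

definition F :: "mon \<Rightarrow> 'a V0A" where "F \<alpha> = Phi (monp Y3 \<alpha>)"

lemma F_rec:
  assumes V: "finite V" "ks \<alpha> \<subseteq> V"
  shows "F (\<alpha> + ee i) = sg (ee i) 1 * F \<alpha>
     + (\<Sum>n\<in>V. sg 0 (q i n) * (of_nat (lk \<alpha> n) * F (\<alpha> - ee n)))
     + (\<Sum>m\<in>V. sg 0 (q m i) * (of_nat (lk \<alpha> m) * F (\<alpha> - ee m)))"
proof -
  let ?u = "monp Y3 \<alpha>"
  have K1: "ks (fst (snd p)) \<subseteq> V" if "p \<in> ks ?u" for p using keys_monpY3[OF that] V(2) by blast
  have K2: "ks (fst p) \<subseteq> V" if "p \<in> ks ?u" for p using keys_monpY3[OF that] V(2) by blast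
  have "F (\<alpha> + ee i) = Phi (sg (ee i, 0, 0) 1 * ?u) + Phi (sg (0, ee i, 0) 1 * ?u) + Phi (sg (0, 0, ee i) 1 * ?u)"
    unfolding F_def monp_add_e Y3_def distrib_right Phi_add ..
  also have "\<dots> = (\<Sum>n\<in>V. sg 0 (q i n) * Phi (pd32 n ?u)) + (\<Sum>m\<in>V. sg 0 (q m i) * Phi (pd31 m ?u)) + sg (ee i) 1 * F \<alpha>"
  proof -
    have X1: "Phi (sg (ee i, 0, 0) 1 * ?u) = (\<Sum>n\<in>V. sg 0 (q i n) * Phi (pd32 n ?u))"
      by (rule Phi_X1[OF V(1)]) (rule K1)
    have X2: "Phi (sg (0, ee i, 0) 1 * ?u) = (\<Sum>m\<in>V. sg 0 (q m i) * Phi (pd31 m ?u))"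
      by (rule Phi_X2[OF V(1)]) (rule K2)
    show ?thesis unfolding X1 X2 Phi_X3 F_def ..
  qed
  also have "\<dots> = (\<Sum>n\<in>V. sg 0 (q i n) * (of_nat (lk \<alpha> n) * F (\<alpha> - ee n))) + (\<Sum>m\<in>V. sg 0 (q m i) * (of_nat (lk \<alpha> m) * F (\<alpha> - ee m))) + sg (ee i) 1 * F \<alpha>"
    unfolding D31 D32 Phi_of_nat F_def ..
  finally show ?thesis by (simp add: algebra_simps)
qed

lemma F_zero: "F 0 = 1"
proof -
  have "counit 1 = 1" using counit_mono[of 0] by (simp add: mono_zero)
  then have "R 0 0 = 1" by (simp add: R_def mono_zero r_tens1L)
  then have "Phi (sg 0 1) = sg 0 1" by (simp only: Phi_single) simp
  then show ?thesis by (simp add: F_def)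
qed

lemma EQ_single: "EQ emb r (sg \<alpha> c) = sg 0 (emb c) * F \<alpha>"
proof -
  have "Delta2 (sg \<alpha> c) = sg 0 c * monp Y3 \<alpha>" by (rule Delta2_single)
  then show ?thesis by (simp add: EQ_Phi Phi_scal F_def)
qed

lemma EQ_add: "EQ emb r (f + g) = EQ emb r f + EQ emb r g"
  by (simp add: EQ_Phi Delta2_add Phi_add)

lemma EQ_zero: "EQ emb r 0 = 0"
  by (simp add: EQ_Phi Delta2_def Phi_zero)

end



abbreviation dv :: "nat \<Rightarrow> 'a::comm_ring_1 V0A \<Rightarrow> 'a V0A" where
  "dv n \<equiv> pd (\<lambda>\<alpha>. lk \<alpha> n) (ee n)"

lemma pderiv_dv: "pderiv_var n p = dv n p"
  by (simp add: pderiv_var_def pd_def)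

lemma dv_scal: "dv n (sg 0 c * p) = sg 0 c * dv n p"
proof (rule additive_ext[where u = p and La = "\<lambda>p. dv n (sg 0 c * p)" and Lb = "\<lambda>p. sg 0 c * dv n p"])
  fix a assume "a \<in> ks p"
  show "dv n (sg 0 c * sg a (lk p a)) = sg 0 c * dv n (sg a (lk p a))"
    by (simp add: mult_single mult.left_commute)
qed (simp_all add: pd_add distrib_left)

lemma dv_of_nat: "dv n (of_nat k * p) = of_nat k * dv n p"
  by (rule additive_of_nat) (simp_all add: pd_add)

lemma dv_comm: "dv m (dv n p) = dv n (dv m p)"
proof (rule additive_ext[where u = p and La = "\<lambda>p. dv m (dv n p)" and Lb = "\<lambda>p. dv n (dv m p)"])
  fix a assume "a \<in> ks p"
  have e: "a - ee n - ee m = a - ee m - ee n"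
    by (rule poly_mapping_eqI) (simp add: lookup_minus diff_commute)
  have c: "of_nat (lk (a - ee n) m) * (of_nat (lk a n) :: 'a) = of_nat (lk (a - ee m) n) * of_nat (lk a m)"
    by (cases "m = n") (simp_all add: lookup_minus mult.commute)
  show "dv m (dv n (sg a (lk p a))) = dv n (dv m (sg a (lk p a)))"
    using c by (simp add: e mult.assoc[symmetric])
qed (simp_all add: pd_add)

lemma dv_X: "dv n (sg (ee i) 1 * p) = (if n = i then p else 0) + sg (ee i) 1 * dv n p"
proof -
  have h1: "lk (ee i + \<beta>) n = lk (ee i) n + lk \<beta> n" for \<beta> by (simp add: lookup_add)
  have h2: "ee i + \<beta> - ee n = ee i + (\<beta> - ee n)" if "0 < lk \<beta> n" for \<beta>
    using that by (rule mon_shift1)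
  have h3: "ee i + \<beta> - ee n = (ee i - ee n) + \<beta>" if "0 < lk (ee i) n" for \<beta>
    using that by (rule mon_shift2)
  have "dv n (sg (ee i) 1 * p) = sg (ee i - ee n) (of_nat (lk (ee i) n)) * p + sg (ee i) 1 * dv n p"
    by (rule pd_mult_single[of "\<lambda>\<alpha>. lk \<alpha> n", OF h1 h2 h3])
  then show ?thesis by (auto simp: ee_sub_self)
qed

lemma dv_one: "dv n (1::'a::comm_ring_1 V0A) = 0"
  by (rule pd_one) simp

lemma dv_dv_sum: "dv n (sum f S) = (\<Sum>x\<in>S. dv n (f x))"
  by (rule pd_sum)

lemma sum_if_const: "(\<Sum>n\<in>V. if b then f n else 0) = (if b then (\<Sum>n\<in>V. f n) else 0)"
  by simp

lemma mult_if0: "c * (if b then x else 0) = (if b then c * x else (0::'b::mult_zero))"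
  by simp

context BC
begin

definition Qv :: "nat set \<Rightarrow> 'a V0A \<Rightarrow> 'a V0A" where
  "Qv V p = (\<Sum>m\<in>V. \<Sum>n\<in>V. sg 0 (q m n) * dv m (dv n p))"

definition Dv :: "nat set \<Rightarrow> nat \<Rightarrow> 'a V0A \<Rightarrow> 'a V0A" where
  "Dv V i p = (\<Sum>n\<in>V. sg 0 (q i n + q n i) * dv n p)"

definition E :: "nat set \<Rightarrow> nat \<Rightarrow> 'a V0A \<Rightarrow> 'a V0A" where
  "E V N p = (\<Sum>k\<le>N. sg 0 (emb (1 / of_nat (fact k))) * (Qv V ^^ k) p)"

lemma Qv_add: "Qv V (a + b) = Qv V a + Qv V b"
  by (simp add: Qv_def pd_add distrib_left sum.distrib)
lemma Qv_zero: "Qv V 0 = 0" by (simp add: Qv_def)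
lemma Qv_scal: "Qv V (sg 0 c * p) = sg 0 c * Qv V p"
  by (simp add: Qv_def dv_scal sum_distrib_left mult.left_commute)
lemma Qv_of_nat: "Qv V (of_nat k * p) = of_nat k * Qv V p"
  by (rule additive_of_nat) (simp_all add: Qv_add Qv_zero)
lemma Qv_sum: "Qv V (sum f S) = (\<Sum>x\<in>S. Qv V (f x))"
  by (rule additive_sum) (simp_all add: Qv_add Qv_zero)

lemma Dv_add: "Dv V i (a + b) = Dv V i a + Dv V i b"
  by (simp add: Dv_def pd_add distrib_left sum.distrib)
lemma Dv_zero: "Dv V i 0 = 0" by (simp add: Dv_def)
lemma Dv_scal: "Dv V i (sg 0 c * p) = sg 0 c * Dv V i p"
  by (simp add: Dv_def dv_scal sum_distrib_left mult.left_commute)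
lemma Dv_of_nat: "Dv V i (of_nat k * p) = of_nat k * Dv V i p"
  by (rule additive_of_nat) (simp_all add: Dv_add Dv_zero)
lemma Dv_sum: "Dv V i (sum f S) = (\<Sum>x\<in>S. Dv V i (f x))"
  by (rule additive_sum) (simp_all add: Dv_add Dv_zero)

lemma dv_Qv: "dv n (Qv V p) = Qv V (dv n p)"
proof -
  have "dv n (Qv V p) = (\<Sum>m\<in>V. \<Sum>k\<in>V. sg 0 (q m k) * dv n (dv m (dv k p)))"
    by (simp add: Qv_def dv_dv_sum dv_scal)
  also have "\<dots> = (\<Sum>m\<in>V. \<Sum>k\<in>V. sg 0 (q m k) * dv m (dv k (dv n p)))"
    by (simp add: dv_comm[of n])
  finally show ?thesis by (simp add: Qv_def)
qed

lemma Qv_Dv: "Qv V (Dv V i p) = Dv V i (Qv V p)"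
  by (simp add: Dv_def Qv_sum Qv_scal dv_Qv)

lemma Qpow_add: "(Qv V ^^ k) (a + b) = (Qv V ^^ k) a + (Qv V ^^ k) b"
  by (induction k) (simp_all add: Qv_add)
lemma Qpow_zero: "(Qv V ^^ k) 0 = 0"
  by (induction k) (simp_all add: Qv_zero)
lemma Qpow_scal: "(Qv V ^^ k) (sg 0 c * p) = sg 0 c * (Qv V ^^ k) p"
  by (induction k) (simp_all add: Qv_scal)
lemma Qpow_of_nat: "(Qv V ^^ k) (of_nat j * p) = of_nat j * (Qv V ^^ k) p"
  by (induction k) (simp_all add: Qv_of_nat)

lemma Dv_pow: "Dv V i ((Qv V ^^ k) p) = (Qv V ^^ k) (Dv V i p)"
  by (induction k) (simp_all add: Qv_Dv[symmetric])

lemma Qv_X: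
  assumes V: "finite V" "i \<in> V"
  shows "Qv V (sg (ee i) 1 * p) = sg (ee i) 1 * Qv V p + Dv V i p"
proof -
  have "dv m (dv n (sg (ee i) 1 * p)) = (if n = i then dv m p else 0) + (if m = i then dv n p else 0)
        + sg (ee i) 1 * dv m (dv n p)" for m n
    by (simp add: dv_X pd_add)
  then have "Qv V (sg (ee i) 1 * p) = (\<Sum>m\<in>V. \<Sum>n\<in>V. (if n = i then sg 0 (q m n) * dv m p else 0)
      + (if m = i then sg 0 (q m n) * dv n p else 0) + sg (ee i) 1 * (sg 0 (q m n) * dv m (dv n p)))"
    unfolding Qv_def by (simp add: distrib_left mult.left_commute mult_if0)
  also have "\<dots> = (\<Sum>m\<in>V. sg 0 (q m i) * dv m p) + (\<Sum>n\<in>V. sg 0 (q i n) * dv n p) + sg (ee i) 1 * Qv V p"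
    using V by (simp add: sum.distrib Qv_def sum_distrib_left sum_if_const)
  also have "\<dots> = sg (ee i) 1 * Qv V p + Dv V i p"
    by (simp add: Dv_def sum.distrib single_add distrib_right)
  finally show ?thesis .
qed

lemma Qpow_X:
  assumes V: "finite V" "i \<in> V"
  shows "(Qv V ^^ Suc k) (sg (ee i) 1 * p) = sg (ee i) 1 * (Qv V ^^ Suc k) p + of_nat (Suc k) * Dv V i ((Qv V ^^ k) p)"
proof (induction k)
  case 0
  then show ?case by (simp add: Qv_X[OF V])
next
  case (Suc k)
  have "(Qv V ^^ Suc (Suc k)) (sg (ee i) 1 * p) = Qv V ((Qv V ^^ Suc k) (sg (ee i) 1 * p))" by simp
  also have "\<dots> = Qv V (sg (ee i) 1 * (Qv V ^^ Suc k) p) + of_nat (Suc k) * Qv V (Dv V i ((Qv V ^^ k) p))"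
    by (simp only: Suc Qv_add Qv_of_nat)
  also have "\<dots> = sg (ee i) 1 * (Qv V ^^ Suc (Suc k)) p + of_nat (Suc (Suc k)) * Dv V i ((Qv V ^^ Suc k) p)"
    by (simp add: Qv_X[OF V] Qv_Dv algebra_simps)
  finally show ?case .
qed

lemma E_add: "E V N (a + b) = E V N a + E V N b"
  by (simp add: E_def Qpow_add distrib_left sum.distrib)
lemma E_zero: "E V N 0 = 0" by (simp add: E_def Qpow_zero)
lemma E_scal: "E V N (sg 0 c * p) = sg 0 c * E V N p"
  by (simp add: E_def Qpow_scal sum_distrib_left mult.left_commute)
lemma E_sum: "E V N (sum f S) = (\<Sum>x\<in>S. E V N (f x))"
  by (rule additive_sum) (simp_all add: E_add E_zero)

lemma Dv_E: "Dv V i (E V N p) = E V N (Dv V i p)"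
  by (simp add: E_def Dv_sum Dv_scal Dv_pow)

lemma coef_shift: "sg 0 (emb (1 / of_nat (fact (Suc k)))) * of_nat (Suc k) = (sg 0 (emb (1 / of_nat (fact k))) :: 'a V0A)"
proof -
  have o: "(of_nat (Suc k) :: 'a V0A) = sg 0 (emb (of_nat (Suc k)))" by (simp only: emb_of_nat single_of_nat)
  have f: "(of_nat (fact (Suc k)) :: complex) = of_nat (Suc k) * of_nat (fact k)"
    by (simp only: fact_Suc of_nat_mult of_nat_id)
  have nz: "(of_nat (fact k)::complex) \<noteq> 0" "(of_nat (Suc k)::complex) \<noteq> 0"
    by (simp only: of_nat_eq_0_iff fact_nonzero, simp) (metis of_nat_eq_0_iff nat.distinct(1))
  have "1 / of_nat (fact (Suc k)) * of_nat (Suc k) = (1 / of_nat (fact k) :: complex)"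
    unfolding f using nz by (simp only: divide_simps) simp
  moreover have "emb (1 / of_nat (fact (Suc k))) * emb (of_nat (Suc k)) = emb (1 / of_nat (fact (Suc k)) * of_nat (Suc k))"
    by (simp only: emb_mult)
  ultimately have "emb (1 / of_nat (fact (Suc k))) * emb (of_nat (Suc k)) = emb (1 / of_nat (fact k))"
    by simp
  then show ?thesis unfolding o by (simp only: mult_single) simp
qed

lemma E_X:
  assumes V: "finite V" "i \<in> V"
  shows "E V (Suc M) (sg (ee i) 1 * p) = sg (ee i) 1 * E V (Suc M) p + Dv V i (E V M p)"
proof -
  let ?c = "\<lambda>k. (sg 0 (emb (1 / of_nat (fact k))) :: 'a V0A)"
  have "E V (Suc M) (sg (ee i) 1 * p) = ?c 0 * (sg (ee i) 1 * p) + (\<Sum>k\<le>M. ?c (Suc k) * (Qv V ^^ Suc k) (sg (ee i) 1 * p))"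
    unfolding E_def by (subst sum.atMost_Suc_shift) simp
  also have "\<dots> = ?c 0 * (sg (ee i) 1 * p) + (\<Sum>k\<le>M. ?c (Suc k) * (sg (ee i) 1 * (Qv V ^^ Suc k) p)
        + (?c (Suc k) * of_nat (Suc k)) * Dv V i ((Qv V ^^ k) p))"
    by (simp only: Qpow_X[OF V] distrib_left mult.assoc)
  also have "\<dots> = sg (ee i) 1 * (?c 0 * p + (\<Sum>k\<le>M. ?c (Suc k) * (Qv V ^^ Suc k) p))
        + (\<Sum>k\<le>M. ?c k * Dv V i ((Qv V ^^ k) p))"
    by (simp only: coef_shift sum.distrib distrib_left sum_distrib_left mult.left_commute add.assoc)
  also have "?c 0 * p + (\<Sum>k\<le>M. ?c (Suc k) * (Qv V ^^ Suc k) p) = E V (Suc M) p"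
    unfolding E_def by (subst sum.atMost_Suc_shift) simp
  also have "(\<Sum>k\<le>M. ?c k * Dv V i ((Qv V ^^ k) p)) = Dv V i (E V M p)"
    by (simp add: E_def Dv_sum Dv_scal)
  finally show ?thesis .
qed

end



definition dbound :: "nat \<Rightarrow> 'a::zero V0A \<Rightarrow> bool" where
  "dbound d p \<longleftrightarrow> (\<forall>\<alpha>\<in>ks p. deg \<alpha> \<le> d)"

lemma dbound_add: "dbound d a \<Longrightarrow> dbound d b \<Longrightarrow> dbound d (a + b)"
  unfolding dbound_def using keys_add[of a b] by blast

lemma dbound_zero: "dbound d 0" by (simp add: dbound_def)

lemma dbound_scal: "dbound d p \<Longrightarrow> dbound d (sg 0 c * (p::'a::comm_semiring_1 V0A))"
  unfolding dbound_def using keys_mult[of "sg 0 c" p] by (force split: if_splits)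

lemma dbound_sum: "(\<And>x. x \<in> S \<Longrightarrow> dbound d (f x)) \<Longrightarrow> dbound d (sum f S)"
  unfolding dbound_def using keys_sum[of f S] by blast

lemma dbound_mono: "d \<le> d' \<Longrightarrow> dbound d p \<Longrightarrow> dbound d' p"
  unfolding dbound_def by force

lemma dbound_single: "dbound (deg \<alpha>) (sg \<alpha> c)"
  by (simp add: dbound_def)

lemma keys_dv:
  assumes "\<alpha> \<in> ks (dv n (p::'a::comm_ring_1 V0A))"
  shows "\<exists>\<beta>\<in>ks p. 0 < lk \<beta> n \<and> \<alpha> = \<beta> - ee n"
proof -
  from assms keys_sum[of "\<lambda>\<beta>. sg (\<beta> - ee n) (of_nat (lk \<beta> n) * lk p \<beta>)" "ks p"]
  obtain \<beta> where b: "\<beta> \<in> ks p" "\<alpha> \<in> ks (sg (\<beta> - ee n) (of_nat (lk \<beta> n) * lk p \<beta>))"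
    unfolding pd_def by blast
  then have "of_nat (lk \<beta> n) * lk p \<beta> \<noteq> 0" "\<alpha> = \<beta> - ee n" by (auto split: if_splits)
  then have "lk \<beta> n \<noteq> 0" by (metis mult_zero_left of_nat_0)
  with b(1) \<open>\<alpha> = \<beta> - ee n\<close> show ?thesis by auto
qed

lemma lk_le_deg: "lk \<beta> n \<le> deg \<beta>"
proof (cases "n \<in> ks \<beta>")
  case True
  then show ?thesis unfolding deg_def by (intro member_le_sum) auto
next
  case False
  then show ?thesis by (simp add: in_keys_iff)
qed

lemma dbound_dv: "dbound d p \<Longrightarrow> dbound (d - 1) (dv n (p::'a::comm_ring_1 V0A))"
  unfolding dbound_def using keys_dv deg_sub_e by fastforce

lemma dv_dbound0: "dbound 0 p \<Longrightarrow> dv n (p::'a::comm_ring_1 V0A) = 0"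
proof -
  assume d: "dbound 0 p"
  have "ks (dv n p) = {}"
  proof (rule ccontr)
    assume "ks (dv n p) \<noteq> {}"
    then obtain \<alpha> where "\<alpha> \<in> ks (dv n p)" by blast
    then obtain \<beta> where "\<beta> \<in> ks p" "0 < lk \<beta> n" using keys_dv by blast
    with d lk_le_deg[of \<beta> n] show False unfolding dbound_def by force
  qed
  then show ?thesis by simp
qed

lemma dv_notvar:
  assumes "n \<notin> vars (p::'a::comm_ring_1 V0A)"
  shows "dv n p = 0"
proof -
  have "\<And>\<beta>. \<beta> \<in> ks p \<Longrightarrow> lk \<beta> n = 0" using assms by (auto simp: vars_def in_keys_iff)
  then show ?thesis unfolding pd_def by (intro sum.neutral) simp
qed

lemma vars_dv: "vars (dv n (p::'a::comm_ring_1 V0A)) \<subseteq> vars p"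
  unfolding vars_def using keys_dv keys_sub_e by fastforce

lemma vars_add: "vars (a + b) \<subseteq> vars a \<union> vars b"
  unfolding vars_def using keys_add[of a b] by blast

lemma vars_scal: "vars (sg 0 c * (p::'a::comm_semiring_1 V0A)) \<subseteq> vars p"
  unfolding vars_def using keys_mult[of "sg 0 c" p] by (force split: if_splits)

lemma vars_sum: "vars (sum f S) \<subseteq> (\<Union>x\<in>S. vars (f x))"
  unfolding vars_def using keys_sum[of f S] by blast

lemma finite_vars: "finite (vars p)"
  by (simp add: vars_def)

context BC
begin

lemma dbound_Qv: "dbound d p \<Longrightarrow> dbound (d - 1) (Qv V p)"
  unfolding Qv_def
  by (intro dbound_sum dbound_scal dbound_mono[OF _ dbound_dv[OF dbound_dv]]) auto

lemma Qv_dbound0: "dbound 0 p \<Longrightarrow> Qv V p = 0"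
  by (simp add: Qv_def dv_dbound0)

lemma Qpow_vanish: "dbound d p \<Longrightarrow> d < k \<Longrightarrow> (Qv V ^^ k) p = 0"
proof (induction d arbitrary: p k)
  case 0
  then obtain k' where k: "k = Suc k'" by (cases k) auto
  show ?case unfolding k funpow_Suc_right o_def Qv_dbound0[OF 0(1)] by (rule Qpow_zero)
next
  case (Suc d)
  then obtain k' where k: "k = Suc k'" by (cases k) auto
  have "dbound d (Qv V p)" using dbound_Qv[OF Suc(2)] by simp
  then show ?case unfolding k funpow_Suc_right o_def using Suc k by auto
qed

lemma E_stable: "dbound d p \<Longrightarrow> d \<le> N \<Longrightarrow> E V N p = E V d p"
  unfolding E_def
  by (rule sum.mono_neutral_right) (auto simp: Qpow_vanish)

lemma E_of_nat: "E V N (of_nat k * p) = of_nat k * E V N p"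
  by (rule additive_of_nat) (simp_all add: E_add E_zero)

lemma G_main: "finite V \<Longrightarrow> ks \<alpha> \<subseteq> V \<Longrightarrow> F \<alpha> = E V (deg \<alpha>) (sg \<alpha> 1)"
proof (induction "deg \<alpha>" arbitrary: \<alpha> rule: less_induct)
  case less
  note V = less.prems
  show ?case
  proof (cases "\<alpha> = 0")
    case True
    then show ?thesis by (simp add: F_zero E_def)
  next
    case False
    then obtain i where i: "i \<in> ks \<alpha>" by (metis keys_eq_empty ex_in_conv)
    then have pos: "0 < lk \<alpha> i" by (simp add: in_keys_iff)
    define \<beta> where "\<beta> = \<alpha> - ee i"
    have a: "\<alpha> = \<beta> + ee i" unfolding \<beta>_def using sub_e_add[OF pos] by simp
    have iV: "i \<in> V" using i V by auto
    have bV: "ks \<beta> \<subseteq> V" unfolding \<beta>_def using keys_sub_e V(2) by blast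
    define d where "d = deg \<beta>"
    have da: "deg \<alpha> = Suc d" unfolding a d_def by (rule deg_add_e)
    have IHb: "F \<beta> = E V d (sg \<beta> 1)" unfolding d_def
      by (rule less.hyps) (simp_all add: da d_def V(1) bV)
    have IHn: "of_nat (lk \<beta> n) * F (\<beta> - ee n) = of_nat (lk \<beta> n) * E V d (sg (\<beta> - ee n) 1)" for n
    proof (cases "lk \<beta> n = 0")
      case True then show ?thesis by simp
    next
      case False
      then have p: "0 < lk \<beta> n" by simp
      have dd: "deg (\<beta> - ee n) < deg \<alpha>" using deg_sub_e[OF p] da d_def by simp
      have "F (\<beta> - ee n) = E V (deg (\<beta> - ee n)) (sg (\<beta> - ee n) 1)"
        by (rule less.hyps[OF dd V(1)]) (use bV keys_sub_e in blast)
      also have "\<dots> = E V d (sg (\<beta> - ee n) 1)"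
        by (rule E_stable[symmetric, OF dbound_single]) (simp add: deg_sub_e[OF p] d_def)
      finally show ?thesis by simp
    qed
    have "F \<alpha> = sg (ee i) 1 * F \<beta>
       + (\<Sum>n\<in>V. sg 0 (q i n) * (of_nat (lk \<beta> n) * F (\<beta> - ee n)))
       + (\<Sum>m\<in>V. sg 0 (q m i) * (of_nat (lk \<beta> m) * F (\<beta> - ee m)))"
      unfolding a by (rule F_rec[OF V(1) bV])
    also have "\<dots> = sg (ee i) 1 * E V d (sg \<beta> 1)
       + (\<Sum>n\<in>V. sg 0 (q i n + q n i) * (of_nat (lk \<beta> n) * E V d (sg (\<beta> - ee n) 1)))"
      by (simp add: IHb IHn single_add distrib_right sum.distrib)
    also have "\<dots> = E V (deg \<alpha>) (sg \<alpha> 1)"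
    proof -
      have s: "sg \<alpha> 1 = sg (ee i) 1 * sg \<beta> (1::'a)" by (simp add: a mult_single add.commute)
      have dvs: "dv n (sg \<beta> 1) = of_nat (lk \<beta> n) * sg (\<beta> - ee n) (1::'a)" for n
        by (simp add: mult_single flip: single_of_nat)
      have "E V (deg \<alpha>) (sg \<alpha> 1) = sg (ee i) 1 * E V (Suc d) (sg \<beta> 1) + Dv V i (E V d (sg \<beta> 1))"
        unfolding s da by (rule E_X[OF V(1) iV])
      also have "E V (Suc d) (sg \<beta> 1) = E V d (sg \<beta> 1)"
        unfolding d_def by (rule E_stable[OF dbound_single]) simp
      also have "Dv V i (E V d (sg \<beta> 1)) = (\<Sum>n\<in>V. sg 0 (q i n + q n i) * (of_nat (lk \<beta> n) * E V d (sg (\<beta> - ee n) 1)))"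
        unfolding Dv_E unfolding Dv_def dvs E_sum E_scal E_of_nat ..
      finally show ?thesis by simp
    qed
    finally show ?thesis .
  qed
qed

lemma Qop_eq:
  assumes V: "finite V" "vars p \<subseteq> V"
  shows "Qop q p = Qv V p"
proof -
  have inner: "(\<Sum>n\<in>vars p. sg 0 (q m n) * dv m (dv n p)) = (\<Sum>n\<in>V. sg 0 (q m n) * dv m (dv n p))" for m
    by (rule sum.mono_neutral_left) (auto simp: V dv_notvar)
  have outer: "(\<Sum>m\<in>vars p. \<Sum>n\<in>V. sg 0 (q m n) * dv m (dv n p)) = (\<Sum>m\<in>V. \<Sum>n\<in>V. sg 0 (q m n) * dv m (dv n p))"
  proof (rule sum.mono_neutral_left)
    show "\<forall>m\<in>V - vars p. (\<Sum>n\<in>V. sg 0 (q m n) * dv m (dv n p)) = 0"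
    proof
      fix m assume "m \<in> V - vars p"
      then have "m \<notin> vars (dv n p)" for n using vars_dv by blast
      then show "(\<Sum>n\<in>V. sg 0 (q m n) * dv m (dv n p)) = 0" by (simp add: dv_notvar)
    qed
  qed (use V in auto)
  show ?thesis unfolding Qop_def Qv_def pderiv_dv inner outer ..
qed

lemma vars_Qv: "vars p \<subseteq> V \<Longrightarrow> vars (Qv V p) \<subseteq> V"
proof -
  assume "vars p \<subseteq> V"
  then have "vars (sg 0 (q m n) * dv m (dv n p)) \<subseteq> V" for m n
    using vars_scal vars_dv by blast
  then show ?thesis unfolding Qv_def using vars_sum by blast
qed

lemma Qop_pow: "finite V \<Longrightarrow> vars p \<subseteq> V \<Longrightarrow> (Qop q ^^ k) p = (Qv V ^^ k) p \<and> vars ((Qv V ^^ k) p) \<subseteq> V"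
  by (induction k) (auto simp: Qop_eq vars_Qv)

end

theorem lemma3p2:
  fixes emb :: "complex \<Rightarrow> 'a::comm_ring_1"
    and r :: "V0V0 \<Rightarrow> 'a"
    and f :: V0
  assumes "calg_hom emb"
    and "bichar emb r"
  shows "EQ emb r f = expQ emb (\<lambda>m n. r (tens (var m) (var n))) (base_ext emb f)"
proof -
  interpret BC emb r by unfold_locales (rule assms)+
  have qq: "(\<lambda>m n. r (tens (var m) (var n))) = q" by (simp add: fun_eq_iff q_def)
  define V where "V = (\<Union>\<alpha>\<in>ks f. ks \<alpha>)"
  have fV: "finite V" by (simp add: V_def)
  define P where "P = base_ext emb f"
  have Pdef: "P = (\<Sum>\<alpha>\<in>ks f. sg \<alpha> (emb (lk f \<alpha>)))" by (simp add: P_def base_ext_def)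
  have lkP: "lk P \<alpha> = emb (lk f \<alpha>)" for \<alpha>
  proof (cases "\<alpha> \<in> ks f")
    case True
    then show ?thesis by (simp add: Pdef lookup_sum lookup_single when_def)
  next
    case False
    then show ?thesis by (simp add: Pdef lookup_sum lookup_single when_def in_keys_iff)
  qed
  have vP: "vars P \<subseteq> V"
  proof -
    have "ks P \<subseteq> ks f" using lkP by (auto simp: in_keys_iff)
    then show ?thesis by (auto simp: vars_def V_def)
  qed
  define N where "N = tdeg P"
  have dP: "dbound N P"
    unfolding dbound_def N_def tdeg_def deg_def by (auto intro: Max_ge)
  have "expQ emb q P = E V N P"
    unfolding expQ_def E_def N_def using Qop_pow[OF fV vP] by simp
  also have "\<dots> = (\<Sum>\<alpha>\<in>ks f. sg 0 (emb (lk f \<alpha>)) * E V N (sg \<alpha> 1))"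
    unfolding Pdef E_sum by (simp add: mult_single flip: E_scal)
  also have "\<dots> = (\<Sum>\<alpha>\<in>ks f. sg 0 (emb (lk f \<alpha>)) * F \<alpha>)"
  proof (rule sum.cong[OF refl])
    fix \<alpha> assume a: "\<alpha> \<in> ks f"
    show "sg 0 (emb (lk f \<alpha>)) * E V N (sg \<alpha> 1) = sg 0 (emb (lk f \<alpha>)) * F \<alpha>"
    proof (cases "emb (lk f \<alpha>) = 0")
      case True then show ?thesis by simp
    next
      case False
      then have "\<alpha> \<in> ks P" by (simp add: in_keys_iff lkP)
      then have "deg \<alpha> \<le> N" using dP by (simp add: dbound_def)
      then have "E V N (sg \<alpha> 1) = E V (deg \<alpha>) (sg \<alpha> 1)" by (rule E_stable[OF dbound_single])
      also have "\<dots> = F \<alpha>" by (rule G_main[symmetric, OF fV]) (use a in \<open>auto simp: V_def\<close>)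
      finally show ?thesis by simp
    qed
  qed
  also have "\<dots> = EQ emb r f"
  proof -
    have "EQ emb r f = EQ emb r (\<Sum>\<alpha>\<in>ks f. sg \<alpha> (lk f \<alpha>))" by (subst pm_expand[of f], rule refl)
    also have "\<dots> = (\<Sum>\<alpha>\<in>ks f. EQ emb r (sg \<alpha> (lk f \<alpha>)))"
      by (rule additive_sum) (simp_all add: EQ_add EQ_zero)
    finally show ?thesis by (simp add: EQ_single)
  qed
  finally show ?thesis unfolding qq P_def ..
qed


end
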